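(* Let $q$ be an odd prime power, $n\ge 5$, and let $M$ be an $n\times n$ matrix with entries in $\mathbb{F}_q$. Then $0\in\mathrm{Num}'_0(M)_q$.
   Context: For $M=(m_{ij})$ with entries in $\mathbb{F}_q$ and $u=(x_1,\dots,x_n)\in\mathbb{F}_q^n$, with the Hermitian form $\langle u,v\rangle=\sum_i u_i^qv_i$ one has $\langle u,u\rangle=\sum_i x_i^2$ and $\langle u,Mu\rangle=\sum_{i,j}m_{ij}x_ix_j$. $\mathrm{Num}'_0(M)_q=\{\langle u,Mu\rangle: u\in\mathbb{F}_q^n\setminus\{0\},\ \langle u,u\rangle=0\}$. *)

theory Defs
  imports "HOL-Analysis.Finite_Cartesian_Product"
begin

definition herm :: "'a::{finite,field}^'n \<Rightarrow> 'a^'n \<Rightarrow> 'a" where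
  "herm u v = (\<Sum>i\<in>UNIV. (u $ i) ^ CARD('a) * v $ i)"

definition num0' :: "'a::{finite,field}^'n^'n \<Rightarrow> 'a set" where
  "num0' M = {herm u (M *v u) | u. u \<noteq> 0 \<and> herm u u = 0}"

end

theory Submission
  imports Defs "HOL-Computational_Algebra.Polynomial" "HOL-Library.FuncSet"
begin


lemma card_ge2: "CARD('a::{finite,field}) \<ge> 2"
proof -
  have "{0::'a,1} \<subseteq> UNIV" by simp
  hence "card {0::'a,1} \<le> CARD('a)" by (intro card_mono) auto
  thus ?thesis by simp
qed

lemma of_nat_card_zero: "of_nat CARD('a) = (0::'a::{finite,field})"
proof -
  have "(\<Sum>t\<in>(UNIV::'a set). t + 1) = (\<Sum>t\<in>UNIV. t)"
  proof -
    have b: "bij ((\<lambda>t::'a. t + 1))" by (rule bijI') (auto, metis diff_add_cancel)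
    show ?thesis using sum.reindex_bij_betw[OF b, of "\<lambda>t. t"] by simp
  qed
  moreover have "(\<Sum>t\<in>(UNIV::'a set). t + 1) = (\<Sum>t\<in>UNIV. t) + of_nat CARD('a)"
    by (simp add: sum.distrib)
  ultimately show ?thesis by simp
qed

lemma fermat_pm1:
  fixes x :: "'a::{finite,field}"
  assumes "x \<noteq> 0" shows "x ^ (CARD('a) - 1) = 1"
proof -
  let ?S = "UNIV - {0::'a}"
  have b: "bij_betw (\<lambda>y. x * y) ?S ?S"
    using assms by (intro bij_betwI[where g="\<lambda>y. y / x"]) auto
  have "(\<Prod>y\<in>?S. x * y) = (\<Prod>y\<in>?S. y)"
    using prod.reindex_bij_betw[OF b, of "\<lambda>y. y"] by simp
  moreover have "(\<Prod>y\<in>?S. x * y) = x ^ card ?S * (\<Prod>y\<in>?S. y)"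
    by (simp add: prod.distrib)
  moreover have "(\<Prod>y\<in>?S. y) \<noteq> 0" by (simp add: prod_zero_iff)
  moreover have "card ?S = CARD('a) - 1" by (simp add: card_Diff_subset)
  ultimately show ?thesis by (metis mult_cancel_right1)
qed

lemma fermat:
  fixes x :: "'a::{finite,field}"
  shows "x ^ CARD('a) = x"
proof (cases "x = 0")
  case True then show ?thesis using card_ge2[where 'a='a] by simp
next
  case False
  have "x ^ CARD('a) = x ^ (CARD('a) - 1) * x"
    using card_ge2[where 'a='a] by (metis Suc_diff_1 less_le_trans pos2 power_Suc2)
  then show ?thesis using fermat_pm1[OF False] by simp
qed

lemma powsum_zero:
  assumes "k < CARD('a::{finite,field}) - 1"
  shows "(\<Sum>t\<in>(UNIV::'a set). t ^ k) = 0"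
proof (cases "k = 0")
  case True then show ?thesis using of_nat_card_zero[where 'a='a] by simp
next
  case False
  define p :: "'a poly" where "p = monom 1 k + [:-1:]"
  have dp: "degree p = k" unfolding p_def using False
    by (subst degree_add_eq_left) (auto simp: degree_monom_eq)
  hence "p \<noteq> 0" using False by auto
  hence c: "card {x. poly p x = 0} \<le> k" using card_poly_roots_bound[of p] dp by simp
  have "\<exists>a::'a. a \<noteq> 0 \<and> a ^ k \<noteq> 1"
  proof (rule ccontr)
    assume "\<not> ?thesis"
    hence "UNIV - {0} \<subseteq> {x. poly p x = 0}" by (clarsimp simp: p_def poly_monom) metis
    hence "card (UNIV - {0::'a}) \<le> card {x. poly p x = 0}" by (intro card_mono) auto
    with c assms show False by (simp add: card_Diff_subset)
  qed
  then obtain a :: 'a where a: "a \<noteq> 0" "a ^ k \<noteq> 1" by blast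
  have b: "bij ((\<lambda>t. a * t))" using a by (intro bij_betwI[where g="\<lambda>y. y / a"]) auto
  have "(\<Sum>t\<in>(UNIV::'a set). (a*t) ^ k) = (\<Sum>t\<in>UNIV. t ^ k)"
    using sum.reindex_bij_betw[OF b, of "\<lambda>t. t^k"] by simp
  hence "a ^ k * (\<Sum>t\<in>(UNIV::'a set). t ^ k) = 1 * (\<Sum>t\<in>UNIV. t ^ k)"
    by (simp add: power_mult_distrib sum_distrib_left)
  thus ?thesis using a(2) by (metis mult_cancel_right)
qed



definition mon :: "('n::finite \<Rightarrow> nat) \<Rightarrow> ('n \<Rightarrow> 'a::comm_ring_1) \<Rightarrow> 'a" where
  "mon e x = (\<Prod>i\<in>UNIV. x i ^ e i)"

definition pf :: "nat \<Rightarrow> (('n::finite \<Rightarrow> 'a::comm_ring_1) \<Rightarrow> 'a) \<Rightarrow> bool" where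
  "pf d f \<longleftrightarrow> (\<exists>L. (\<forall>ce\<in>set L. sum (snd ce) UNIV \<le> d) \<and>
       f = (\<lambda>x. \<Sum>ce\<leftarrow>L. fst ce * mon (snd ce) x))"

lemma pf_const: "pf d (\<lambda>x. c)"
  unfolding pf_def by (rule exI[of _ "[(c, \<lambda>_. 0)]"]) (simp add: mon_def)

lemma pf_var:
  fixes i :: "'n::finite"
  shows "pf 1 (\<lambda>x::'n\<Rightarrow>'a::comm_ring_1. x i)"
  unfolding pf_def
proof (rule exI[of _ "[(1, \<lambda>j. if j = i then 1::nat else 0)]"], intro conjI)
  show "\<forall>ce\<in>set [(1::'a, \<lambda>j. if j = i then 1::nat else 0)]. sum (snd ce) UNIV \<le> 1" by simp
  show "(\<lambda>x. x i) = (\<lambda>x. \<Sum>ce\<leftarrow>[(1::'a, \<lambda>j. if j = i then 1::nat else 0)]. fst ce * mon (snd ce) x)"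
    by (auto simp: mon_def if_distrib[of "power _"] prod.delta cong: if_cong)
qed

lemma pf_mono: "pf d f \<Longrightarrow> d \<le> d' \<Longrightarrow> pf d' f"
proof -
  assume "pf d f" "d \<le> d'"
  then obtain L where "\<forall>ce\<in>set L. sum (snd ce) UNIV \<le> d" "f = (\<lambda>x. \<Sum>ce\<leftarrow>L. fst ce * mon (snd ce) x)"
    unfolding pf_def by blast
  with \<open>d \<le> d'\<close> show ?thesis unfolding pf_def by (intro exI[of _ L]) auto
qed

lemma pf_add: assumes "pf d f" "pf d g" shows "pf d (\<lambda>x. f x + g x)"
proof -
  obtain L1 where 1: "\<forall>ce\<in>set L1. sum (snd ce) UNIV \<le> d" "f = (\<lambda>x. \<Sum>ce\<leftarrow>L1. fst ce * mon (snd ce) x)"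
    using assms(1) unfolding pf_def by blast
  obtain L2 where 2: "\<forall>ce\<in>set L2. sum (snd ce) UNIV \<le> d" "g = (\<lambda>x. \<Sum>ce\<leftarrow>L2. fst ce * mon (snd ce) x)"
    using assms(2) unfolding pf_def by blast
  show ?thesis unfolding pf_def
    by (rule exI[of _ "L1 @ L2"]) (use 1 2 in auto)
qed

lemma pf_neg: assumes "pf d f" shows "pf d (\<lambda>x. - f x)"
proof -
  obtain L1 where 1: "\<forall>ce\<in>set L1. sum (snd ce) UNIV \<le> d" "f = (\<lambda>x. \<Sum>ce\<leftarrow>L1. fst ce * mon (snd ce) x)"
    using assms(1) unfolding pf_def by blast
  have "(\<lambda>x. - f x) = (\<lambda>x. \<Sum>ce\<leftarrow>map (\<lambda>ce. (- fst ce, snd ce)) L1. fst ce * mon (snd ce) x)"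
    unfolding 1(2) by (rule ext, induction L1) auto
  then show ?thesis unfolding pf_def using 1(1) by (intro exI[of _ "map (\<lambda>ce. (- fst ce, snd ce)) L1"]) auto
qed

lemma pf_diff: "pf d f \<Longrightarrow> pf d g \<Longrightarrow> pf d (\<lambda>x. f x - g x)"
  using pf_add[of d f "\<lambda>x. - g x"] pf_neg[of d g] by simp

lemma mon_add: "mon (\<lambda>i. e1 i + e2 i) x = mon e1 x * mon e2 x"
  unfolding mon_def by (simp add: power_add prod.distrib)

lemma pf_mult: assumes "pf d f" "pf d' g" shows "pf (d + d') (\<lambda>x. f x * g x)"
proof -
  obtain L1 where 1: "\<forall>ce\<in>set L1. sum (snd ce) UNIV \<le> d" "f = (\<lambda>x. \<Sum>ce\<leftarrow>L1. fst ce * mon (snd ce) x)"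
    using assms(1) unfolding pf_def by blast
  obtain L2 where 2: "\<forall>ce\<in>set L2. sum (snd ce) UNIV \<le> d'" "g = (\<lambda>x. \<Sum>ce\<leftarrow>L2. fst ce * mon (snd ce) x)"
    using assms(2) unfolding pf_def by blast
  define P where "P = concat (map (\<lambda>a. map (\<lambda>b. (fst a * fst b, \<lambda>i. snd a i + snd b i)) L2) L1)"
  have "\<forall>ce\<in>set P. sum (snd ce) UNIV \<le> d + d'"
    using 1(1) 2(1) by (auto simp: P_def sum.distrib add_mono)
  moreover have "(\<lambda>x. f x * g x) = (\<lambda>x. \<Sum>ce\<leftarrow>P. fst ce * mon (snd ce) x)"
  proof
    fix x
    have "(\<Sum>ce\<leftarrow>L1. fst ce * mon (snd ce) x) * (\<Sum>ce\<leftarrow>L2. fst ce * mon (snd ce) x)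
      = (\<Sum>ce\<leftarrow>concat (map (\<lambda>a. map (\<lambda>b. (fst a * fst b, \<lambda>i. snd a i + snd b i)) L2) L1). fst ce * mon (snd ce) x)"
    proof (induction L1)
      case Nil then show ?case by simp
    next
      case (Cons a L1)
      have "(\<Sum>ce\<leftarrow>map (\<lambda>b. (fst a * fst b, \<lambda>i. snd a i + snd b i)) L2. fst ce * mon (snd ce) x)
          = fst a * mon (snd a) x * (\<Sum>ce\<leftarrow>L2. fst ce * mon (snd ce) x)"
        by (simp add: sum_list_const_mult[symmetric] o_def mon_add mult_ac)
      then show ?case using Cons by (simp add: distrib_right)
    qed
    then show "f x * g x = (\<Sum>ce\<leftarrow>P. fst ce * mon (snd ce) x)" unfolding 1(2) 2(2) P_def by simp
  qed
  ultimately show ?thesis unfolding pf_def by blast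
qed

lemma pf_pow: "pf d f \<Longrightarrow> pf (k * d) (\<lambda>x. f x ^ k)"
proof (induction k)
  case 0 then show ?case using pf_const[of 0 1] by simp
next
  case (Suc k)
  then show ?case using pf_mult[of d f "k*d" "\<lambda>x. f x ^ k"] by (simp add: add.commute)
qed

lemma pf_sum: assumes "finite A" "\<And>i. i \<in> A \<Longrightarrow> pf d (f i)" shows "pf d (\<lambda>x. \<Sum>i\<in>A. f i x)"
  using assms
proof (induction A rule: finite_induct)
  case empty then show ?case using pf_const[of d 0] by simp
next
  case (insert a A)
  then show ?case using pf_add[of d "f a" "\<lambda>x. \<Sum>i\<in>A. f i x"] by simp
qed

lemma mon_sum_zero:
  fixes e :: "'n::finite \<Rightarrow> nat"
  assumes "sum e UNIV < CARD('n) * (CARD('a::{finite,field}) - 1)"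
  shows "(\<Sum>x\<in>(UNIV::('n \<Rightarrow> 'a) set). mon e x) = 0"
proof -
  have "\<exists>i. e i < CARD('a) - 1"
  proof (rule ccontr)
    assume "\<not> ?thesis"
    hence "(\<Sum>i\<in>(UNIV::'n set). CARD('a) - 1) \<le> sum e UNIV" by (intro sum_mono) (simp add: not_less)
    with assms show False by simp
  qed
  then obtain i where i: "e i < CARD('a) - 1" by blast
  have "(\<Sum>x\<in>(UNIV::('n \<Rightarrow> 'a) set). mon e x) = (\<Prod>i\<in>UNIV. \<Sum>t\<in>(UNIV::'a set). t ^ e i)"
    unfolding mon_def using prod_sum_PiE[of "UNIV::'n set" "\<lambda>_. UNIV::'a set" "\<lambda>i t. t ^ e i"]
    by simp
  also have "\<dots> = 0" using powsum_zero[OF i] by (intro prod_zero) auto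
  finally show ?thesis .
qed

lemma pf_sum_zero:
  assumes "pf d (f :: ('n::finite \<Rightarrow> 'a::{finite,field}) \<Rightarrow> 'a)"
    and "d < CARD('n) * (CARD('a) - 1)"
  shows "(\<Sum>x\<in>UNIV. f x) = 0"
proof -
  obtain L where 1: "\<forall>ce\<in>set L. sum (snd ce) UNIV \<le> d" "f = (\<lambda>x. \<Sum>ce\<leftarrow>L. fst ce * mon (snd ce) x)"
    using assms(1) unfolding pf_def by blast
  have "(\<Sum>x\<in>UNIV. \<Sum>ce\<leftarrow>L. fst ce * mon (snd ce) x) = 0"
    using 1(1)
  proof (induction L)
    case Nil then show ?case by simp
  next
    case (Cons a L)
    have "(\<Sum>x\<in>(UNIV::('n \<Rightarrow> 'a) set). mon (snd a) x) = 0"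
      using Cons.prems assms(2) by (intro mon_sum_zero) auto
    hence "(\<Sum>x\<in>(UNIV::('n \<Rightarrow> 'a) set). fst a * mon (snd a) x) = 0"
      by (simp add: sum_distrib_left[symmetric])
    then show ?case using Cons by (simp add: sum.distrib)
  qed
  then show ?thesis using 1(2) by simp
qed



theorem corollary3:
  fixes M :: "'a::{finite,field}^'n::finite^'n"
  assumes "odd (CARD('a))"
    and "CARD('n) \<ge> 5"
  shows "0 \<in> num0' M"
proof -
  define q where "q = CARD('a)"
  have q2: "q \<ge> 2" unfolding q_def by (rule card_ge2)
  define Q1 :: "('n \<Rightarrow> 'a) \<Rightarrow> 'a" where "Q1 x = (\<Sum>i\<in>UNIV. x i * x i)" for x
  define Q2 :: "('n \<Rightarrow> 'a) \<Rightarrow> 'a" where "Q2 x = (\<Sum>i\<in>UNIV. x i * (\<Sum>j\<in>UNIV. M$i$j * x j))" for x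
  define G where "G x = (1 - Q1 x ^ (q-1)) * (1 - Q2 x ^ (q-1))" for x
  have p1: "pf 2 Q1" unfolding Q1_def[abs_def]
    using pf_mult[OF pf_var pf_var] by (intro pf_sum) (auto simp: numeral_2_eq_2)
  have p2: "pf 2 Q2" unfolding Q2_def[abs_def]
  proof (intro pf_sum)
    fix i
    have "pf (0+1) (\<lambda>x::'n\<Rightarrow>'a. M$i$j * x j)" for j by (rule pf_mult[OF pf_const pf_var])
    hence "pf 1 (\<lambda>x::'n\<Rightarrow>'a. \<Sum>j\<in>UNIV. M$i$j * x j)" by (intro pf_sum) auto
    from pf_mult[OF pf_var this] show "pf 2 (\<lambda>x::'n\<Rightarrow>'a. x i * (\<Sum>j\<in>UNIV. M$i$j * x j))" by (simp add: numeral_2_eq_2)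
  qed auto
  have "pf ((q-1)*2 + (q-1)*2) G" unfolding G_def[abs_def]
    by (intro pf_mult pf_diff pf_const pf_pow p1 p2)
  moreover have "(q-1)*2 + (q-1)*2 < CARD('n) * (CARD('a) - 1)"
  proof -
    have "(q-1)*2 + (q-1)*2 = 4 * (q-1)" by simp
    also have "\<dots> < 5 * (q-1)" using q2 by simp
    also have "\<dots> \<le> CARD('n) * (q-1)" using assms(2) by (intro mult_right_mono) auto
    finally show ?thesis unfolding q_def .
  qed
  ultimately have s0: "(\<Sum>x\<in>UNIV. G x) = 0" by (rule pf_sum_zero)
  define Z where "Z = {x. Q1 x = 0 \<and> Q2 x = 0}"
  have ind: "G x = (if x \<in> Z then 1 else 0)" for x
  proof -
    have h: "1 - y ^ (q-1) = (if y = 0 then 1 else 0)" for y :: 'a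
    proof (cases "y = 0")
      case True then show ?thesis using q2 by simp
    next
      case False then show ?thesis using fermat_pm1[of y] unfolding q_def by simp
    qed
    show ?thesis unfolding G_def Z_def h[of "Q1 x"] h[of "Q2 x"] by simp
  qed
  have "(\<Sum>x\<in>UNIV. G x) = (\<Sum>x\<in>UNIV. if x \<in> Z then (1::'a) else 0)"
    using ind by simp
  also have "\<dots> = (\<Sum>x\<in>Z. 1)" by (simp only: sum.If_cases finite) simp
  finally have "(\<Sum>x\<in>UNIV. G x) = (\<Sum>x\<in>Z. 1)" .
  hence cz: "of_nat (card Z) = (0::'a)" using s0 by simp
  have "(\<lambda>_. 0) \<in> Z" unfolding Z_def Q1_def Q2_def by (simp only: mem_Collect_eq mult_zero_left mult_zero_right sum.neutral_const)
  have "\<exists>x\<in>Z. x \<noteq> (\<lambda>_. 0)"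
  proof (rule ccontr)
    assume "\<not> ?thesis"
    with \<open>(\<lambda>_. 0) \<in> Z\<close> have "Z = {\<lambda>_. 0}" by blast
    hence "card Z = 1" by (simp only: card.empty card_insert_disjoint finite.emptyI empty_iff) simp
    with cz show False by simp
  qed
  then obtain x where x: "x \<in> Z" "x \<noteq> (\<lambda>_. 0)" by blast
  define u :: "'a^'n" where "u = vec_lambda x"
  have ux: "u $ i = x i" for i unfolding u_def by simp
  have "u \<noteq> 0"
  proof
    assume "u = 0"
    hence "x i = 0" for i using ux[of i] by simp
    with x(2) show False by auto
  qed
  moreover have "herm u u = Q1 x"
    unfolding herm_def Q1_def by (simp add: ux fermat)
  moreover have "herm u (M *v u) = Q2 x"
    unfolding herm_def Q2_def by (simp add: ux fermat matrix_vector_mult_def)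
  moreover have "Q1 x = 0" "Q2 x = 0" using x(1) unfolding Z_def by auto
  ultimately have "herm u (M *v u) = 0 \<and> u \<noteq> 0 \<and> herm u u = 0" by simp
  then show ?thesis unfolding num0'_def by (metis (mono_tags, lifting) mem_Collect_eq)
qed

end
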